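(* Let $p$ be an odd prime and $a,s$ natural numbers with $a<p$. For every set partition $\delta$ of $\{1,\ldots,as\}$ into $s$ sets of size $a$, there are exactly $p^{(a-1)s}$ distinct set partitions of $\{1,\ldots,asp\}$ into $sp$ sets of size $a$ which are fixed by $R_{as}$ and have type $\delta$.
   Context: For $j\geq 1$ let $z_j=(p(j-1)+1,\ldots,pj)$ and $\mathcal{O}_j=\{p(j-1)+1,\ldots,pj\}$. Let $\sigma=z_1\cdots z_{as}\in S_{asp}$ (right actions) and $R_{as}=\langle\sigma\rangle$. Given a set partition $\delta=\{\delta_1,\ldots,\delta_s\}$ of $\{1,\ldots,as\}$ into sets of size $a$, a set partition $\omega$ of $\{1,\ldots,asp\}$ into $sp$ sets of size $a$ has type $\delta$ if there are sets $A_1,\ldots,A_s$ of size $a$ with $|A_i\cap\mathcal{O}_j|=1$ if $j\in\delta_i$ and $|A_i\cap\mathcal{O}_j|=0$ if $j\notin\delta_i$, such that $\omega=\{A_i\sigma^k : 1\leq i\leq s,\ 0\leq k\leq p-1\}$. Every set partition fixed by $R_{as}$ has a unique type. *)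

theory Defs
  imports Main "HOL-Library.Disjoint_Sets" "HOL-Computational_Algebra.Primes"
begin

definition orb :: "nat \<Rightarrow> nat \<Rightarrow> nat set" where
  "orb p j = {p * (j - 1) + 1 .. p * j}"

text \<open>sigma = z_1 ... z_n in Sym({1..n*p}), where z_j = (p(j-1)+1, ..., pj)
  is the p-cycle on O_j; points outside {1..n*p} are fixed.\<close>
definition sigma :: "nat \<Rightarrow> nat \<Rightarrow> nat \<Rightarrow> nat" where
  "sigma p n x = (if 1 \<le> x \<and> x \<le> n * p
                  then (if x mod p = 0 then x + 1 - p else x + 1)
                  else x)"

definition act_pow :: "nat \<Rightarrow> nat \<Rightarrow> nat \<Rightarrow> nat set \<Rightarrow> nat set" where
  "act_pow p n k A = (sigma p n ^^ k) ` A"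

definition set_partition_into :: "nat set \<Rightarrow> nat \<Rightarrow> nat \<Rightarrow> nat set set \<Rightarrow> bool" where
  "set_partition_into S m a P \<longleftrightarrow> partition_on S P \<and> card P = m \<and> (\<forall>B\<in>P. card B = a)"

text \<open>omega is fixed by R = <sigma> (with n = as cycles).\<close>
definition fixed_by_R :: "nat \<Rightarrow> nat \<Rightarrow> nat set set \<Rightarrow> bool" where
  "fixed_by_R p n \<omega> \<longleftrightarrow> (\<forall>k. (act_pow p n k) ` \<omega> = \<omega>)"

text \<open>omega has type delta (n = as). The sets A_i are indexed by the blocks of delta.\<close>
definition has_type :: "nat \<Rightarrow> nat \<Rightarrow> nat \<Rightarrow> nat set set \<Rightarrow> nat set set \<Rightarrow> bool" where
  "has_type p a n \<delta> \<omega> \<longleftrightarrow>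
     (\<exists>A :: nat set \<Rightarrow> nat set.
        (\<forall>D\<in>\<delta>. card (A D) = a \<and>
                 (\<forall>j. (j \<in> D \<longrightarrow> card (A D \<inter> orb p j) = 1) \<and>
                      (j \<notin> D \<longrightarrow> card (A D \<inter> orb p j) = 0))) \<and>
        \<omega> = {act_pow p n k (A D) | D k. D \<in> \<delta> \<and> k \<le> p - 1})"

end

theory Submission
  imports Defs
begin


definition pt :: "nat \<Rightarrow> nat \<Rightarrow> nat \<Rightarrow> nat" where "pt p j r = p*(j-1) + 1 + r"
definition blk :: "nat \<Rightarrow> (nat \<Rightarrow> nat) \<Rightarrow> nat set \<Rightarrow> nat set" where
  "blk p h D = (\<lambda>j. pt p j (h j)) ` D"
definition sh :: "nat \<Rightarrow> (nat \<Rightarrow> nat) \<Rightarrow> nat \<Rightarrow> nat \<Rightarrow> nat" where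
  "sh p h k = (\<lambda>j. (h j + k) mod p)"

lemma pt_inj:
  assumes "r < p" "r' < p" "1 \<le> j" "1 \<le> j'"
  shows "pt p j r = pt p j' r' \<longleftrightarrow> j = j' \<and> r = r'"
proof
  assume h: "pt p j r = pt p j' r'"
  hence e: "p*(j-1) + r = p*(j'-1) + r'" by (simp add: pt_def)
  have "(p*(j-1) + r) div p = j - 1" "(p*(j-1) + r) mod p = r" using assms by auto
  moreover have "(p*(j'-1) + r') div p = j' - 1" "(p*(j'-1) + r') mod p = r'" using assms by auto
  ultimately have "j - 1 = j' - 1 \<and> r = r'" using e by metis
  thus "j = j' \<and> r = r'" using assms by auto
qed simp

lemma pt_orb:
  assumes "r < p" "1 \<le> j'"
  shows "pt p j' r \<in> orb p j \<longleftrightarrow> j' = j"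
proof
  assume h: "pt p j' r \<in> orb p j"
  show "j' = j"
  proof (rule ccontr)
    assume ne: "j' \<noteq> j"
    show False
    proof (cases "j' < j")
      case True
      hence "j' \<le> j - 1" by simp
      hence "p * j' \<le> p * (j - 1)" by simp
      moreover have "pt p j' r \<le> p * j'" 
      proof -
        have "p * j' = p * (j' - 1) + p" using assms by (cases j') auto
        thus ?thesis using assms unfolding pt_def by simp
      qed
      moreover have "p*(j-1)+1 \<le> pt p j' r" using h by (simp add: orb_def)
      ultimately show False by linarith
    next
      case False
      hence "j \<le> j' - 1" using ne by simp
      hence "p * j \<le> p * (j' - 1)" by simp
      moreover have "pt p j' r \<le> p * j" using h by (simp add: orb_def)
      moreover have "p*(j'-1) + 1 \<le> pt p j' r" by (simp add: pt_def)
      ultimately show False by linarith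
    qed
  qed
next
  assume "j' = j"
  moreover have "p * j' = p * (j' - 1) + p" using assms by (cases j') auto
  ultimately show "pt p j' r \<in> orb p j" using assms by (auto simp: orb_def pt_def)
qed

lemma pt_range:
  assumes "1 \<le> j" "j \<le> n" "r < p"
  shows "pt p j r \<in> {1..n*p}"
proof -
  have "p * j = p * (j - 1) + p" using assms by (cases j) auto
  moreover have "p * j \<le> n * p" using assms by (simp add: mult.commute)
  ultimately show ?thesis using assms by (auto simp: pt_def)
qed

lemma pt_surj:
  assumes "x \<in> {1..n*p}" "0 < p"
  shows "x = pt p ((x-1) div p + 1) ((x-1) mod p) \<and> 1 \<le> (x-1) div p + 1 \<and> (x-1) div p + 1 \<le> n"
proof -
  have "x - 1 < n * p" using assms by auto
  hence "(x-1) div p < n" using assms by (simp add: less_mult_imp_div_less)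
  moreover have "x = p * ((x-1) div p) + (x-1) mod p + 1" using assms
  proof -
    have "x - 1 = p * ((x-1) div p) + (x-1) mod p" by (simp add: mult_div_mod_eq)
    thus ?thesis using assms by simp
  qed
  ultimately show ?thesis by (auto simp: pt_def)
qed

lemma sigma_pt:
  assumes "0 < p" "1 \<le> j" "j \<le> n" "r < p"
  shows "sigma p n (pt p j r) = pt p j (Suc r mod p)"
proof -
  have rng: "pt p j r \<in> {1..n*p}" using pt_range assms by blast
  have sg: "sigma p n (pt p j r) = (if pt p j r mod p = 0 then pt p j r + 1 - p else pt p j r + 1)"
    using rng unfolding sigma_def by simp
  have m: "pt p j r mod p = Suc r mod p" unfolding pt_def by (simp add: mod_add_left_eq[symmetric])
  show ?thesis
  proof (cases "Suc r = p")
    case True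
    hence "pt p j r mod p = 0" using m by simp
    moreover have "pt p j r + 1 - p = pt p j 0" using True unfolding pt_def by simp
    ultimately show ?thesis using sg True by simp
  next
    case False
    hence "Suc r < p" using assms by simp
    hence "pt p j r mod p \<noteq> 0" using m by simp
    moreover have "pt p j r + 1 = pt p j (Suc r)" unfolding pt_def by simp
    ultimately show ?thesis using sg \<open>Suc r < p\<close> by simp
  qed
qed

lemma sigma_pow_pt:
  assumes "0 < p" "1 \<le> j" "j \<le> n" "r < p"
  shows "(sigma p n ^^ k) (pt p j r) = pt p j ((r + k) mod p)"
proof (induction k)
  case 0 then show ?case using assms by simp
next
  case (Suc k)
  have "(sigma p n ^^ Suc k) (pt p j r) = sigma p n (pt p j ((r + k) mod p))" using Suc by simp
  also have "\<dots> = pt p j (Suc ((r + k) mod p) mod p)" using assms by (simp add: sigma_pt)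
  also have "Suc ((r + k) mod p) mod p = (r + Suc k) mod p" by (simp add: mod_Suc_eq)
  finally show ?case .
qed

lemma mod_cancel:
  assumes "k < (p::nat)" "k' < p" "(x+k) mod p = (x+k') mod p" shows "k = k'"
proof -
  have "\<And>k k'. k < p \<Longrightarrow> k' < p \<Longrightarrow> (x+k) mod p = (x+k') mod p \<Longrightarrow> k \<le> k' \<Longrightarrow> k = k'"
  proof -
    fix k k' assume a: "k < p" "k' < p" "(x+k) mod p = (x+k') mod p" "k \<le> k'"
    hence "p dvd (x+k') - (x+k)" using mod_eq_dvd_iff_nat[of "x+k" "x+k'" p] by simp
    hence "p dvd k' - k" by simp
    moreover have "k' - k < p" using a by simp
    ultimately have "k' - k = 0" using dvd_imp_le by (metis not_gr0 not_less)
    thus "k = k'" using a by simp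
  qed
  thus ?thesis using assms by (metis nat_le_linear)
qed



lemma blk_cong: "(\<And>j. j \<in> D \<Longrightarrow> h j = h' j) \<Longrightarrow> blk p h D = blk p h' D"
  unfolding blk_def by auto

lemma sh_lt: "0 < p \<Longrightarrow> sh p h k j < p"
  by (simp add: sh_def)

lemma sh_sh: "sh p (sh p h k) k' = sh p h (k + k')"
  by (simp add: sh_def mod_add_left_eq add.assoc)

lemma sh_mod: "sh p h (k mod p) = sh p h k"
  by (simp add: sh_def mod_add_right_eq)

lemma mem_blk:
  assumes "\<forall>j\<in>D. 1 \<le> j" "\<forall>j\<in>D. h j < p" "1 \<le> j" "r < p"
  shows "pt p j r \<in> blk p h D \<longleftrightarrow> j \<in> D \<and> h j = r"
proof
  assume "pt p j r \<in> blk p h D"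
  then obtain j' where j': "j' \<in> D" "pt p j r = pt p j' (h j')" by (auto simp: blk_def)
  then have "j = j' \<and> r = h j'" using pt_inj[of r p "h j'" j j'] assms by simp
  thus "j \<in> D \<and> h j = r" using j' by auto
next
  assume "j \<in> D \<and> h j = r" thus "pt p j r \<in> blk p h D" by (auto simp: blk_def)
qed

lemma blk_sub:
  assumes "D \<subseteq> {1..n}" "\<forall>j\<in>D. h j < p"
  shows "blk p h D \<subseteq> {1..n*p}"
proof
  fix x assume "x \<in> blk p h D"
  then obtain j where j: "j \<in> D" "x = pt p j (h j)" by (auto simp: blk_def)
  thus "x \<in> {1..n*p}" using pt_range[of j n "h j" p] assms by auto
qed

lemma card_blk:
  assumes "\<forall>j\<in>D. 1 \<le> j" "\<forall>j\<in>D. h j < p"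
  shows "card (blk p h D) = card D"
  unfolding blk_def
proof (rule card_image)
  show "inj_on (\<lambda>j. pt p j (h j)) D"
  proof (rule inj_onI)
    fix x y assume "x \<in> D" "y \<in> D" "pt p x (h x) = pt p y (h y)"
    thus "x = y" using assms pt_inj[of "h x" p "h y" x y] by simp
  qed
qed

lemma blk_orb:
  assumes "\<forall>j\<in>D. 1 \<le> j" "\<forall>j\<in>D. h j < p"
  shows "blk p h D \<inter> orb p j = (if j \<in> D then {pt p j (h j)} else {})"
proof (rule set_eqI)
  fix x
  show "x \<in> blk p h D \<inter> orb p j \<longleftrightarrow> x \<in> (if j \<in> D then {pt p j (h j)} else {})"
  proof
    assume "x \<in> blk p h D \<inter> orb p j"
    then obtain j' where j': "j' \<in> D" "x = pt p j' (h j')" "x \<in> orb p j" by (auto simp: blk_def)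
    hence "j' = j" using pt_orb[of "h j'" p j' j] assms by simp
    thus "x \<in> (if j \<in> D then {pt p j (h j)} else {})" using j' by simp
  next
    assume "x \<in> (if j \<in> D then {pt p j (h j)} else {})"
    hence "j \<in> D" "x = pt p j (h j)" by (auto split: if_splits)
    moreover have "pt p j (h j) \<in> orb p j" using pt_orb[of "h j" p j j] assms \<open>j \<in> D\<close> by simp
    ultimately show "x \<in> blk p h D \<inter> orb p j" by (auto simp: blk_def)
  qed
qed

lemma act_blk:
  assumes "0 < p" "D \<subseteq> {1..n}" "\<forall>j\<in>D. h j < p"
  shows "act_pow p n k (blk p h D) = blk p (sh p h k) D"
  unfolding act_pow_def blk_def image_image
proof (rule image_cong[OF refl])
  fix j assume "j \<in> D"
  thus "(sigma p n ^^ k) (pt p j (h j)) = pt p j (sh p h k j)"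
    using assms sigma_pow_pt[of p j n "h j" k] by (auto simp: sh_def)
qed

lemma orbit_shift:
  assumes "0 < p"
  shows "(\<lambda>k. blk p (sh p h (c+k)) D) ` {..<p} = (\<lambda>k. blk p (sh p h k) D) ` {..<p}"
proof
  show "(\<lambda>k. blk p (sh p h (c+k)) D) ` {..<p} \<subseteq> (\<lambda>k. blk p (sh p h k) D) ` {..<p}"
  proof
    fix B assume "B \<in> (\<lambda>k. blk p (sh p h (c+k)) D) ` {..<p}"
    then obtain k where "B = blk p (sh p h (c+k)) D" by auto
    hence "B = blk p (sh p h ((c+k) mod p)) D" by (simp add: sh_mod)
    thus "B \<in> (\<lambda>k. blk p (sh p h k) D) ` {..<p}" using assms by auto
  qed
next
  show "(\<lambda>k. blk p (sh p h k) D) ` {..<p} \<subseteq> (\<lambda>k. blk p (sh p h (c+k)) D) ` {..<p}"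
  proof
    fix B assume "B \<in> (\<lambda>k. blk p (sh p h k) D) ` {..<p}"
    then obtain k where k: "k < p" "B = blk p (sh p h k) D" by auto
    define k' where "k' = (k + (p-1)*c) mod p"
    have "(c + k') mod p = (c + (k + (p-1)*c)) mod p" unfolding k'_def by (simp add: mod_add_right_eq)
    also have "c + (k + (p-1)*c) = k + p * c"
    proof -
      obtain q where "p = Suc q" using assms by (cases p) auto
      thus ?thesis by simp
    qed
    also have "(k + p * c) mod p = k" using k by simp
    finally have "sh p h (c + k') = sh p h k" using sh_mod[of p h "c+k'"] sh_mod[of p h k] k
      by simp
    moreover have "k' < p" using assms by (simp add: k'_def)
    ultimately show "B \<in> (\<lambda>k. blk p (sh p h (c+k)) D) ` {..<p}" using k
      by (intro image_eqI[of _ _ k']) auto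
  qed
qed



locale setting =
  fixes p n :: nat and \<delta> :: "nat set set"
  assumes ppos: "0 < p" and part: "partition_on {1..n} \<delta>"
begin

lemma D_sub: "D \<in> \<delta> \<Longrightarrow> D \<subseteq> {1..n}"
  using part by (auto simp: partition_on_def)

lemma D_ge1: "D \<in> \<delta> \<Longrightarrow> \<forall>j\<in>D. 1 \<le> j"
proof
  fix j assume "D \<in> \<delta>" "j \<in> D"
  hence "j \<in> {1..n}" using D_sub by blast
  thus "1 \<le> j" by simp
qed

lemma D_ne: "D \<in> \<delta> \<Longrightarrow> D \<noteq> {}"
  using part by (auto simp: partition_on_def)

lemma D_fin: "D \<in> \<delta> \<Longrightarrow> finite D"
  using D_sub finite_subset by blast

lemma fin_delta: "finite \<delta>"
proof -
  have "\<delta> \<subseteq> Pow {1..n}" using D_sub by auto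
  thus ?thesis using finite_subset by blast
qed

lemma D_uniq: "D \<in> \<delta> \<Longrightarrow> D' \<in> \<delta> \<Longrightarrow> j \<in> D \<Longrightarrow> j \<in> D' \<Longrightarrow> D = D'"
  using part unfolding partition_on_def pairwise_def disjnt_def by blast

lemma cover: "j \<in> {1..n} \<Longrightarrow> \<exists>D\<in>\<delta>. j \<in> D"
  using part unfolding partition_on_def by blast

definition Om :: "(nat set \<Rightarrow> nat \<Rightarrow> nat) \<Rightarrow> nat set set" where
  "Om H = (\<lambda>(D,k). blk p (sh p (H D) k) D) ` (\<delta> \<times> {..<p})"

lemma Om_union: "Om H = (\<Union>D\<in>\<delta>. (\<lambda>k. blk p (sh p (H D) k) D) ` {..<p})"
  unfolding Om_def by auto

lemma Om_alt:
  assumes "\<forall>D\<in>\<delta>. \<forall>j\<in>D. H D j < p"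
  shows "{act_pow p n k (blk p (H D) D) | D k. D \<in> \<delta> \<and> k \<le> p - 1} = Om H"
proof -
  have "\<And>D k. D \<in> \<delta> \<Longrightarrow> act_pow p n k (blk p (H D) D) = blk p (sh p (H D) k) D"
  proof -
    fix D k assume D: "D \<in> \<delta>"
    have "\<forall>j\<in>D. H D j < p" using assms D by blast
    thus "act_pow p n k (blk p (H D) D) = blk p (sh p (H D) k) D" using act_blk[OF ppos D_sub[OF D]] by blast
  qed
  moreover have kk: "\<And>k. k \<le> p - 1 \<longleftrightarrow> k < p" using ppos by auto
  ultimately show ?thesis unfolding Om_def
  proof (intro set_eqI iffI)
    fix B assume "B \<in> {act_pow p n k (blk p (H D) D) | D k. D \<in> \<delta> \<and> k \<le> p - 1}"
    then obtain D k where "D \<in> \<delta>" "k \<le> p - 1" "B = act_pow p n k (blk p (H D) D)" by blast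
    thus "B \<in> (\<lambda>(D,k). blk p (sh p (H D) k) D) ` (\<delta> \<times> {..<p})"
      using \<open>\<And>D k. D \<in> \<delta> \<Longrightarrow> act_pow p n k (blk p (H D) D) = blk p (sh p (H D) k) D\<close> kk
      by (intro image_eqI[of _ _ "(D,k)"]) auto
  next
    fix B assume "B \<in> (\<lambda>(D,k). blk p (sh p (H D) k) D) ` (\<delta> \<times> {..<p})"
    then obtain D k where "D \<in> \<delta>" "k < p" "B = blk p (sh p (H D) k) D" by blast
    thus "B \<in> {act_pow p n k (blk p (H D) D) | D k. D \<in> \<delta> \<and> k \<le> p - 1}"
      using \<open>\<And>D k. D \<in> \<delta> \<Longrightarrow> act_pow p n k (blk p (H D) D) = blk p (sh p (H D) k) D\<close> kk
      by blast
  qed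
qed

lemma Om_meet:
  assumes H: "\<forall>D\<in>\<delta>. \<forall>j\<in>D. H D j < p"
    and D: "D \<in> \<delta>" "D' \<in> \<delta>" and k: "k < p" "k' < p"
    and x: "x \<in> blk p (sh p (H D) k) D" "x \<in> blk p (sh p (H D') k') D'"
  shows "D = D' \<and> k = k'"
proof -
  obtain j where j: "j \<in> D" "x = pt p j (sh p (H D) k j)" using x(1) by (auto simp: blk_def)
  have ge: "1 \<le> j" using j D_ge1[OF D(1)] by blast
  have lt: "\<forall>j\<in>D'. sh p (H D') k' j < p" using sh_lt[OF ppos] by blast
  have "pt p j (sh p (H D) k j) \<in> blk p (sh p (H D') k') D'" using x(2) j(2) by simp
  hence m: "j \<in> D' \<and> sh p (H D') k' j = sh p (H D) k j"
    using mem_blk[OF D_ge1[OF D(2)] lt ge sh_lt[OF ppos]] by blast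
  hence DD: "D = D'" using D_uniq[OF D j(1)] by blast
  hence e: "(H D j + k') mod p = (H D j + k) mod p" using m unfolding sh_def by simp
  have "k' = k" using mod_cancel[OF k(2) k(1) e] .
  thus ?thesis using DD by simp
qed

lemma Om_partition:
  assumes H: "\<forall>D\<in>\<delta>. \<forall>j\<in>D. H D j < p"
  shows "partition_on {1..n*p} (Om H)"
proof (rule partition_onI)
  show "\<Union>(Om H) = {1..n*p}"
  proof
    show "\<Union>(Om H) \<subseteq> {1..n*p}"
    proof
      fix x assume "x \<in> \<Union>(Om H)"
      then obtain D k where "D \<in> \<delta>" "x \<in> blk p (sh p (H D) k) D" unfolding Om_def by auto
      thus "x \<in> {1..n*p}" using blk_sub[OF D_sub, of D "sh p (H D) k" p] sh_lt[OF ppos] by blast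
    qed
  next
    show "{1..n*p} \<subseteq> \<Union>(Om H)"
    proof
      fix x assume x: "x \<in> {1..n*p}"
      define j where "j = (x-1) div p + 1"
      define r where "r = (x-1) mod p"
      have xj: "x = pt p j r" "1 \<le> j" "j \<le> n" using pt_surj[OF x ppos] unfolding j_def r_def by auto
      obtain D where D: "D \<in> \<delta>" "j \<in> D" using cover xj by auto
      define k where "k = (r + (p-1) * H D j) mod p"
      have "sh p (H D) k j = (H D j + (r + (p-1) * H D j)) mod p" unfolding sh_def k_def
        by (simp add: mod_add_right_eq)
      also have "H D j + (r + (p-1) * H D j) = r + p * H D j"
      proof -
        obtain q where "p = Suc q" using ppos by (cases p) auto
        thus ?thesis by simp
      qed
      also have "(r + p * H D j) mod p = r" using ppos by (simp add: r_def)
      finally have "x \<in> blk p (sh p (H D) k) D" using xj D unfolding blk_def by auto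
      moreover have "k < p" using ppos by (simp add: k_def)
      ultimately show "x \<in> \<Union>(Om H)" using D unfolding Om_def by blast
    qed
  qed
next
  fix B C assume "B \<in> Om H" "C \<in> Om H" "B \<noteq> C"
  then obtain D k D' k' where B: "D \<in> \<delta>" "k < p" "B = blk p (sh p (H D) k) D"
    and C: "D' \<in> \<delta>" "k' < p" "C = blk p (sh p (H D') k') D'" unfolding Om_def by auto
  show "disjnt B C"
  proof (rule ccontr)
    assume "\<not> disjnt B C"
    then obtain x where "x \<in> B" "x \<in> C" unfolding disjnt_def by auto
    hence "D = D' \<and> k = k'" using Om_meet[OF H B(1) C(1) B(2) C(2)] B C by simp
    thus False using B C \<open>B \<noteq> C\<close> by simp
  qed
next
  show "{} \<notin> Om H" using D_ne unfolding Om_def blk_def by auto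
qed

lemma Om_card:
  assumes H: "\<forall>D\<in>\<delta>. \<forall>j\<in>D. H D j < p"
  shows "card (Om H) = card \<delta> * p"
proof -
  have "inj_on (\<lambda>(D,k). blk p (sh p (H D) k) D) (\<delta> \<times> {..<p})"
  proof (rule inj_onI, clarify)
    fix D k D' k' assume a: "D \<in> \<delta>" "k < p" "D' \<in> \<delta>" "k' < p"
      "blk p (sh p (H D) k) D = blk p (sh p (H D') k') D'"
    obtain j where "j \<in> D" using D_ne[OF a(1)] by auto
    hence "pt p j (sh p (H D) k j) \<in> blk p (sh p (H D) k) D" unfolding blk_def by auto
    thus "D = D' \<and> k = k'" using Om_meet[OF H a(1) a(3) a(2) a(4)] a(5) by simp
  qed
  hence "card (Om H) = card (\<delta> \<times> {..<p})" unfolding Om_def by (rule card_image)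
  thus ?thesis by (simp add: card_cartesian_product)
qed

lemma Om_blocks:
  assumes H: "\<forall>D\<in>\<delta>. \<forall>j\<in>D. H D j < p" and "B \<in> Om H"
  shows "\<exists>D\<in>\<delta>. card B = card D"
proof -
  obtain D k where "D \<in> \<delta>" "B = blk p (sh p (H D) k) D" using assms(2) unfolding Om_def by auto
  thus ?thesis using card_blk[OF D_ge1, of D "sh p (H D) k" p] sh_lt[OF ppos] by auto
qed

lemma Om_fixed:
  assumes H: "\<forall>D\<in>\<delta>. \<forall>j\<in>D. H D j < p"
  shows "act_pow p n k' ` Om H = Om H"
proof -
  have "act_pow p n k' ` Om H = (\<Union>D\<in>\<delta>. act_pow p n k' ` (\<lambda>k. blk p (sh p (H D) k) D) ` {..<p})"
    unfolding Om_union by (simp add: image_UN)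
  also have "\<dots> = (\<Union>D\<in>\<delta>. (\<lambda>k. blk p (sh p (H D) (k'+k)) D) ` {..<p})"
  proof (rule SUP_cong[OF refl])
    fix D assume D: "D \<in> \<delta>"
    show "act_pow p n k' ` (\<lambda>k. blk p (sh p (H D) k) D) ` {..<p} = (\<lambda>k. blk p (sh p (H D) (k'+k)) D) ` {..<p}"
      unfolding image_image
    proof (rule image_cong[OF refl])
      fix k
      have "act_pow p n k' (blk p (sh p (H D) k) D) = blk p (sh p (sh p (H D) k) k') D"
        using act_blk[OF ppos D_sub[OF D]] sh_lt ppos by blast
      thus "act_pow p n k' (blk p (sh p (H D) k) D) = blk p (sh p (H D) (k'+k)) D"
        by (simp add: sh_sh add.commute)
    qed
  qed
  also have "\<dots> = Om H" unfolding Om_union using orbit_shift[OF ppos] by simp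
  finally show ?thesis .
qed

end


lemma orb_pt:
  assumes "x \<in> orb p j" "0 < p" "1 \<le> j"
  shows "x = pt p j ((x-1) mod p)"
proof -
  have xr: "x \<in> {1..j*p}" using assms by (auto simp: orb_def mult.commute)
  have e: "x = pt p ((x-1) div p + 1) ((x-1) mod p)" using pt_surj[OF xr assms(2)] by blast
  have "pt p ((x-1) div p + 1) ((x-1) mod p) \<in> orb p j" using assms(1) e[symmetric] by simp
  moreover have "(x-1) mod p < p" using assms(2) by simp
  ultimately have "(x-1) div p + 1 = j"
    using pt_orb[of "(x-1) mod p" p "(x-1) div p + 1" j] by simp
  hence "pt p ((x-1) div p + 1) ((x-1) mod p) = pt p j ((x-1) mod p)" by simp
  thus ?thesis using e by linarith
qed

context setting
begin

definition Fs :: "nat set \<Rightarrow> (nat \<Rightarrow> nat) set" where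
  "Fs D = PiE D (\<lambda>j. if j = Min D then {0} else {..<p})"

definition GG :: "(nat set \<Rightarrow> nat \<Rightarrow> nat) set" where
  "GG = PiE \<delta> Fs"

lemma GG_lt: "H \<in> GG \<Longrightarrow> \<forall>D\<in>\<delta>. \<forall>j\<in>D. H D j < p"
proof (intro ballI)
  fix D j assume "H \<in> GG" "D \<in> \<delta>" "j \<in> D"
  hence "H D \<in> Fs D" unfolding GG_def by (auto simp: PiE_iff)
  hence "H D j \<in> (if j = Min D then {0} else {..<p})" using \<open>j \<in> D\<close> unfolding Fs_def by (auto simp: PiE_iff)
  thus "H D j < p" using ppos by (auto split: if_splits)
qed

lemma GG_min: "H \<in> GG \<Longrightarrow> D \<in> \<delta> \<Longrightarrow> H D (Min D) = 0"
proof -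
  assume "H \<in> GG" "D \<in> \<delta>"
  hence "H D \<in> Fs D" unfolding GG_def by (auto simp: PiE_iff)
  moreover have "Min D \<in> D" using D_fin D_ne \<open>D \<in> \<delta>\<close> by simp
  ultimately show ?thesis unfolding Fs_def by (auto simp: PiE_iff)
qed

lemma card_Fs: "D \<in> \<delta> \<Longrightarrow> card (Fs D) = p ^ (card D - 1)"
proof -
  assume D: "D \<in> \<delta>"
  let ?f = "\<lambda>j. card (if j = Min D then {0} else {..<p::nat})"
  have m: "Min D \<in> D" using D_fin D_ne D by simp
  have "card (Fs D) = (\<Prod>j\<in>D. ?f j)" unfolding Fs_def using D_fin[OF D] by (rule card_PiE)
  also have "\<dots> = ?f (Min D) * (\<Prod>j\<in>D - {Min D}. ?f j)" using prod.remove[OF D_fin[OF D] m] .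
  also have "(\<Prod>j\<in>D - {Min D}. ?f j) = (\<Prod>j\<in>D - {Min D}. p)" by (rule prod.cong) auto
  also have "\<dots> = p ^ (card D - 1)" using m by (simp add: card_Diff_singleton)
  finally show ?thesis by simp
qed

lemma card_GG:
  assumes "\<forall>D\<in>\<delta>. card D = a"
  shows "card GG = p ^ ((a - 1) * card \<delta>)"
proof -
  have "card GG = (\<Prod>D\<in>\<delta>. card (Fs D))" unfolding GG_def using fin_delta by (rule card_PiE)
  also have "\<dots> = (\<Prod>D\<in>\<delta>. p ^ (a - 1))" using card_Fs assms by (intro prod.cong) auto
  also have "\<dots> = p ^ ((a - 1) * card \<delta>)" by (simp add: power_mult)
  finally show ?thesis .
qed

lemma Om_inj: "inj_on Om GG"
proof (rule inj_onI)
  fix H H' assume H: "H \<in> GG" and H': "H' \<in> GG" and eq: "Om H = Om H'"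
  have Hl: "\<forall>D\<in>\<delta>. \<forall>j\<in>D. H D j < p" using GG_lt[OF H] .
  have Hl': "\<forall>D\<in>\<delta>. \<forall>j\<in>D. H' D j < p" using GG_lt[OF H'] .
  show "H = H'"
  proof (rule PiE_ext)
    show "H \<in> PiE \<delta> Fs" "H' \<in> PiE \<delta> Fs" using H H' unfolding GG_def by auto
  next
    fix D assume D: "D \<in> \<delta>"
    have m: "Min D \<in> D" using D_fin D_ne D by simp
    have ge: "\<forall>j\<in>D. 1 \<le> j" using D_ge1[OF D] .
    let ?B = "blk p (sh p (H D) 0) D"
    have "?B \<in> Om H" unfolding Om_def using D ppos by (intro image_eqI[of _ _ "(D,0)"]) auto
    hence "?B \<in> Om H'" using eq by simp
    then obtain D' k where D': "D' \<in> \<delta>" "k < p" "?B = blk p (sh p (H' D') k) D'"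
      unfolding Om_def by auto
    have ge': "\<forall>j\<in>D'. 1 \<le> j" using D_ge1[OF D'(1)] .
    have lt': "\<forall>j\<in>D'. sh p (H' D') k j < p" using sh_lt[OF ppos] by blast
    have lt0: "\<forall>j\<in>D. sh p (H' D) 0 j < p" using sh_lt[OF ppos] by blast
    have s0: "sh p (H D) 0 (Min D) = 0" using GG_min[OF H D] by (simp add: sh_def)
    have "pt p (Min D) 0 \<in> ?B" unfolding blk_def using m s0 by (intro image_eqI[of _ _ "Min D"]) auto
    hence "pt p (Min D) 0 \<in> blk p (sh p (H' D') k) D'" using D' by simp
    hence mm: "Min D \<in> D' \<and> sh p (H' D') k (Min D) = 0"
      using mem_blk[OF ge' lt', of "Min D" 0] ge m ppos by auto
    hence DD: "D' = D" using D_uniq[OF D D'(1) m] by simp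
    hence "k mod p = 0" using mm GG_min[OF H' D] by (simp add: sh_def)
    hence k0: "k = 0" using D'(2) by simp
    have BB: "?B = blk p (sh p (H' D) 0) D" using D' DD k0 by simp
    show "H D = H' D"
    proof (rule PiE_ext)
      show "H D \<in> PiE D (\<lambda>j. if j = Min D then {0} else {..<p})"
           "H' D \<in> PiE D (\<lambda>j. if j = Min D then {0} else {..<p})"
        using H H' D unfolding GG_def Fs_def by (auto simp: PiE_iff)
    next
      fix j assume j: "j \<in> D"
      have "pt p j (sh p (H D) 0 j) \<in> blk p (sh p (H' D) 0) D" using BB j unfolding blk_def by blast
      hence "sh p (H' D) 0 j = sh p (H D) 0 j"
        using mem_blk[OF ge lt0, of j "sh p (H D) 0 j"] ge j sh_lt[OF ppos] by auto
      thus "H D j = H' D j" using Hl Hl' D j by (simp add: sh_def)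
    qed
  qed
qed

lemma Om_has_type:
  assumes H: "H \<in> GG" and a: "\<forall>D\<in>\<delta>. card D = a"
  shows "has_type p a n \<delta> (Om H)"
  unfolding has_type_def
proof (rule exI[of _ "\<lambda>D. blk p (H D) D"], rule conjI)
  show "\<forall>D\<in>\<delta>. card (blk p (H D) D) = a \<and>
                 (\<forall>j. (j \<in> D \<longrightarrow> card (blk p (H D) D \<inter> orb p j) = 1) \<and>
                      (j \<notin> D \<longrightarrow> card (blk p (H D) D \<inter> orb p j) = 0))"
  proof
    fix D assume D: "D \<in> \<delta>"
    have ge: "\<forall>j\<in>D. 1 \<le> j" using D_ge1[OF D] .
    have lt: "\<forall>j\<in>D. H D j < p" using GG_lt[OF H] D by blast
    show "card (blk p (H D) D) = a \<and>
                 (\<forall>j. (j \<in> D \<longrightarrow> card (blk p (H D) D \<inter> orb p j) = 1) \<and>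
                      (j \<notin> D \<longrightarrow> card (blk p (H D) D \<inter> orb p j) = 0))"
      using card_blk[OF ge lt] a D blk_orb[OF ge lt] by simp
  qed
next
  show "Om H = {act_pow p n k (blk p (H D) D) | D k. D \<in> \<delta> \<and> k \<le> p - 1}"
    using Om_alt[OF GG_lt[OF H]] by simp
qed

lemma blk_of_A:
  assumes D: "D \<in> \<delta>" and c: "card B = card D"
    and o: "\<forall>j. j \<in> D \<longrightarrow> card (B \<inter> orb p j) = 1"
  shows "\<exists>h. (\<forall>j\<in>D. h j < p) \<and> B = blk p h D"
proof -
  have "\<forall>j\<in>D. \<exists>x. B \<inter> orb p j = {x}"
  proof
    fix j assume "j \<in> D"
    hence "card (B \<inter> orb p j) = 1" using o by blast
    thus "\<exists>x. B \<inter> orb p j = {x}" by (rule card_1_singletonE) blast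
  qed
  from bchoice[OF this] obtain X where X: "\<forall>j\<in>D. B \<inter> orb p j = {X j}" by blast
  define h where "h j = (X j - 1) mod p" for j
  have ge: "\<forall>j\<in>D. 1 \<le> j" using D_ge1[OF D] .
  have lt: "\<forall>j\<in>D. h j < p" using ppos by (simp add: h_def)
  have sub: "blk p h D \<subseteq> B"
  proof
    fix x assume "x \<in> blk p h D"
    then obtain j where j: "j \<in> D" "x = pt p j (h j)" by (auto simp: blk_def)
    have "X j \<in> B \<inter> orb p j" using X j by blast
    hence "X j \<in> orb p j" by blast
    hence "X j = pt p j (h j)" unfolding h_def using ppos ge j by (intro orb_pt) auto
    thus "x \<in> B" using j \<open>X j \<in> B \<inter> orb p j\<close> by auto
  qed
  have cb: "card (blk p h D) = card D" using card_blk[OF ge lt] .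
  have "card D > 0" using D_fin[OF D] D_ne[OF D] by auto
  hence "finite B" using c card_ge_0_finite by metis
  hence "blk p h D = B" using card_subset_eq[OF _ sub] cb c by simp
  thus ?thesis using lt by blast
qed

lemma has_type_Om:
  assumes ht: "has_type p a n \<delta> \<omega>" and a: "\<forall>D\<in>\<delta>. card D = a"
  shows "\<exists>H\<in>GG. \<omega> = Om H"
proof -
  obtain A where A: "\<forall>D\<in>\<delta>. card (A D) = a \<and>
                 (\<forall>j. (j \<in> D \<longrightarrow> card (A D \<inter> orb p j) = 1) \<and>
                      (j \<notin> D \<longrightarrow> card (A D \<inter> orb p j) = 0))"
    and w: "\<omega> = {act_pow p n k (A D) | D k. D \<in> \<delta> \<and> k \<le> p - 1}"
    using ht unfolding has_type_def by blast
  have "\<forall>D\<in>\<delta>. \<exists>h. (\<forall>j\<in>D. h j < p) \<and> A D = blk p h D"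
  proof
    fix D assume D: "D \<in> \<delta>"
    show "\<exists>h. (\<forall>j\<in>D. h j < p) \<and> A D = blk p h D"
    proof (rule blk_of_A[OF D])
      show "card (A D) = card D" using A a D by simp
      show "\<forall>j. j \<in> D \<longrightarrow> card (A D \<inter> orb p j) = 1" using A D by blast
    qed
  qed
  from bchoice[OF this] obtain H0 where H0: "\<forall>D\<in>\<delta>. (\<forall>j\<in>D. H0 D j < p) \<and> A D = blk p (H0 D) D" by blast
  have H0l: "\<forall>D\<in>\<delta>. \<forall>j\<in>D. H0 D j < p" using H0 by blast
  have "\<omega> = {act_pow p n k (blk p (H0 D) D) | D k. D \<in> \<delta> \<and> k \<le> p - 1}"
    unfolding w
  proof (rule set_eqI, rule iffI)
    fix B assume "B \<in> {act_pow p n k (A D) | D k. D \<in> \<delta> \<and> k \<le> p - 1}"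
    then obtain D k where "D \<in> \<delta>" "k \<le> p - 1" "B = act_pow p n k (A D)" by blast
    hence "D \<in> \<delta> \<and> k \<le> p - 1 \<and> B = act_pow p n k (blk p (H0 D) D)" using H0 by simp
    thus "B \<in> {act_pow p n k (blk p (H0 D) D) | D k. D \<in> \<delta> \<and> k \<le> p - 1}" by blast
  next
    fix B assume "B \<in> {act_pow p n k (blk p (H0 D) D) | D k. D \<in> \<delta> \<and> k \<le> p - 1}"
    then obtain D k where "D \<in> \<delta>" "k \<le> p - 1" "B = act_pow p n k (blk p (H0 D) D)" by blast
    hence "D \<in> \<delta> \<and> k \<le> p - 1 \<and> B = act_pow p n k (A D)" using H0 by simp
    thus "B \<in> {act_pow p n k (A D) | D k. D \<in> \<delta> \<and> k \<le> p - 1}" by blast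
  qed
  also have "\<dots> = Om H0" using Om_alt[OF H0l] .
  finally have w0: "\<omega> = Om H0" .
  define c where "c D = p - H0 D (Min D)" for D
  define H where "H = (\<lambda>D\<in>\<delta>. \<lambda>j\<in>D. (H0 D j + c D) mod p)"
  have HG: "H \<in> GG"
    unfolding GG_def Fs_def H_def
  proof (rule restrict_PiE_iff[THEN iffD2], intro ballI)
    fix D assume D: "D \<in> \<delta>"
    have m: "Min D \<in> D" using D_fin D_ne D by simp
    show "(\<lambda>j\<in>D. (H0 D j + c D) mod p) \<in> PiE D (\<lambda>j. if j = Min D then {0} else {..<p})"
    proof (rule restrict_PiE_iff[THEN iffD2], intro ballI)
      fix j assume j: "j \<in> D"
      show "(H0 D j + c D) mod p \<in> (if j = Min D then {0} else {..<p})"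
      proof (cases "j = Min D")
        case True
        have "H0 D (Min D) < p" using H0l D m by blast
        hence "H0 D j + c D = p" using True by (simp add: c_def)
        thus ?thesis using True by simp
      next
        case False thus ?thesis using ppos by simp
      qed
    qed
  qed
  have "Om H0 = Om H"
    unfolding Om_union
  proof (rule SUP_cong[OF refl])
    fix D assume D: "D \<in> \<delta>"
    have "\<And>k. blk p (sh p (H D) k) D = blk p (sh p (H0 D) (c D + k)) D"
    proof (rule blk_cong)
      fix k j assume "j \<in> D"
      thus "sh p (H D) k j = sh p (H0 D) (c D + k) j"
        using D unfolding H_def sh_def by (simp add: mod_add_left_eq add.assoc)
    qed
    thus "(\<lambda>k. blk p (sh p (H0 D) k) D) ` {..<p} = (\<lambda>k. blk p (sh p (H D) k) D) ` {..<p}"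
      using orbit_shift[OF ppos, of "H0 D" "c D" D] by simp
  qed
  thus ?thesis using w0 HG by blast
qed

end

theorem lemma3p3:
  fixes p a s :: nat and \<delta> :: "nat set set"
  assumes "prime p" and "odd p" and "a < p"
    and "set_partition_into {1..a * s} s a \<delta>"
  shows "card {\<omega>. set_partition_into {1..a * s * p} (s * p) a \<omega> \<and>
                 fixed_by_R p (a * s) \<omega> \<and> has_type p a (a * s) \<delta> \<omega>}
         = p ^ ((a - 1) * s)"
proof -
  have part: "partition_on {1..a * s} \<delta>" and cd: "card \<delta> = s" and ca: "\<forall>D\<in>\<delta>. card D = a"
    using assms(4) unfolding set_partition_into_def by auto
  have pp: "0 < p" using assms(1) prime_gt_0_nat by blast
  interpret S: setting p "a * s" \<delta> using pp part by unfold_locales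
  let ?T = "{\<omega>. set_partition_into {1..a * s * p} (s * p) a \<omega> \<and>
                 fixed_by_R p (a * s) \<omega> \<and> has_type p a (a * s) \<delta> \<omega>}"
  have "?T = S.Om ` S.GG"
  proof (rule set_eqI, rule iffI)
    fix \<omega> assume "\<omega> \<in> ?T"
    hence "has_type p a (a * s) \<delta> \<omega>" by blast
    then obtain H where "H \<in> S.GG" "\<omega> = S.Om H" using S.has_type_Om ca by blast
    thus "\<omega> \<in> S.Om ` S.GG" by blast
  next
    fix \<omega> assume "\<omega> \<in> S.Om ` S.GG"
    then obtain H where H: "H \<in> S.GG" and w: "\<omega> = S.Om H" by blast
    have Hl: "\<forall>D\<in>\<delta>. \<forall>j\<in>D. H D j < p" using S.GG_lt[OF H] .
    have sp: "set_partition_into {1..a * s * p} (s * p) a \<omega>"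
      unfolding set_partition_into_def
    proof (intro conjI ballI)
      show "partition_on {1..a * s * p} \<omega>" using S.Om_partition[OF Hl] w by simp
      show "card \<omega> = s * p" using S.Om_card[OF Hl] w cd by simp
    next
      fix B assume "B \<in> \<omega>"
      then obtain D where "D \<in> \<delta>" "card B = card D" using S.Om_blocks[OF Hl] w by blast
      thus "card B = a" using ca by simp
    qed
    have fx: "fixed_by_R p (a * s) \<omega>" unfolding fixed_by_R_def using S.Om_fixed[OF Hl] w by simp
    have ht: "has_type p a (a * s) \<delta> \<omega>" using S.Om_has_type[OF H ca] w by simp
    show "\<omega> \<in> ?T" using sp fx ht by blast
  qed
  hence "card ?T = card S.GG" using card_image[OF S.Om_inj] by simp
  also have "\<dots> = p ^ ((a - 1) * s)" using S.card_GG[OF ca] cd by simp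
  finally show ?thesis .
qed

end
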